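(* For $\theta\in[0,\pi/2]$ let $C_\theta=\cos\theta\,(|\uparrow\rangle\langle\uparrow|+|\downarrow\rangle\langle\downarrow|)+\sin\theta\,(|\uparrow\rangle\langle\downarrow|-|\downarrow\rangle\langle\uparrow|)$ and $\gamma_*=\tfrac{1}{\sqrt2}(|\uparrow\rangle+i|\downarrow\rangle)$. Then: (i) for every $\theta\in[0,\pi/2]$ the coin setup $(C_\theta,\gamma_* )$ is symmetric in distribution; (ii) every coin setup $(C,\gamma)$ (with $C\in U(2)$ arbitrary and $\gamma\in\mathbb{C}^2$ a unit vector) that is symmetric in distribution is distributionally equivalent to $(C_\theta,\gamma_* )$ for some $\theta\in[0,\pi/2]$; (iii) if $\theta,\theta'\in[0,\pi/2]$ and $(C_\theta,\gamma_* )\sim_d(C_{\theta'},\gamma_* )$, then $\theta=\theta'$. In other words, $\theta\mapsto(C_\theta,\gamma_* )$ induces a bijection between $[0,\pi/2]$ and the distributional equivalence classes of coin setups that are symmetric in distribution.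
   Context: Let $\mathcal{H}=\ell^2(\mathbb{Z})\otimes\mathbb{C}^2$, with position basis $\{|j\rangle: j\in\mathbb{Z}\}$ of $\ell^2(\mathbb{Z})$ and orthonormal basis $\{|\uparrow\rangle,|\downarrow\rangle\}$ of $\mathbb{C}^2$. A (quantum) coin is any $C\in U(2)$. The conditional translation is $T=\sum_{j\in\mathbb{Z}}|j+1\rangle\langle j|\otimes|\uparrow\rangle\langle\uparrow|+\sum_{j\in\mathbb{Z}}|j-1\rangle\langle j|\otimes|\downarrow\rangle\langle\downarrow|$ and the walk operator is $W(C)=T(\mathbb{1}\otimes C)$. A coin setup is a pair $(C,\gamma)$ with $C\in U(2)$ and $\gamma\in\mathbb{C}^2$ a unit vector (the initial coin state). Its induced distributions are $p_{(C,\gamma)}(j,n)=\langle\psi_n|(|j\rangle\langle j|\otimes\mathbb{1})|\psi_n\rangle$ with $\psi_n=W(C)^n(|0\rangle\otimes\gamma)$, for $j\in\mathbb{Z}$, $n\in\mathbb{N}$. A coin setup is called symmetric in distribution if $p_{(C,\gamma)}(j,n)=p_{(C,\gamma)}(-j,n)$ for all $j\in\mathbb{Z}$ and all $n\in\mathbb{N}$. Two coin setups $\mathcal{C}_1,\mathcal{C}_2$ are distributionally equivalent, written $\mathcal{C}_1\sim_d\mathcal{C}_2$, if $p_{\mathcal{C}_1}(j,n)=p_{\mathcal{C}_2}(j,n)$ for all $j\in\mathbb{Z}$, $n\in\mathbb{N}$. *)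

theory Defs
  imports "HOL-Analysis.Analysis"
begin

text \<open>Coin space C^2 is complex^2; index 1 is the up-state, index 2 the down-state. A walker state is a
  function int => complex^2 (position amplitude map), i.e. an element of
  l^2(Z) tensor C^2 written componentwise.\<close>

definition adj_mat :: "complex^2^2 \<Rightarrow> complex^2^2" where
  "adj_mat C = (\<chi> i j. cnj (C $ j $ i))"

definition unitary2 :: "complex^2^2 \<Rightarrow> bool" where
  "unitary2 C \<longleftrightarrow> adj_mat C ** C = mat 1 \<and> C ** adj_mat C = mat 1"

definition up :: "2" where "up = 1"
definition down :: "2" where "down = 2"

definition walk_step :: "complex^2^2 \<Rightarrow> (int \<Rightarrow> complex^2) \<Rightarrow> (int \<Rightarrow> complex^2)" where
  "walk_step C \<psi> = (\<lambda>j. \<chi> s. if s = up then (C *v \<psi> (j - 1)) $ up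
                                       else (C *v \<psi> (j + 1)) $ down)"

definition walk_state :: "complex^2^2 \<Rightarrow> complex^2 \<Rightarrow> nat \<Rightarrow> (int \<Rightarrow> complex^2)" where
  "walk_state C \<gamma> n = (walk_step C ^^ n) (\<lambda>j. if j = 0 then \<gamma> else 0)"

definition walk_dist :: "complex^2^2 \<Rightarrow> complex^2 \<Rightarrow> int \<Rightarrow> nat \<Rightarrow> real" where
  "walk_dist C \<gamma> j n = (norm (walk_state C \<gamma> n j))\<^sup>2"

definition coin_setup :: "complex^2^2 \<Rightarrow> complex^2 \<Rightarrow> bool" where
  "coin_setup C \<gamma> \<longleftrightarrow> unitary2 C \<and> norm \<gamma> = 1"

definition symmetric_in_distribution :: "complex^2^2 \<Rightarrow> complex^2 \<Rightarrow> bool" where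
  "symmetric_in_distribution C \<gamma> \<longleftrightarrow> (\<forall>j n. walk_dist C \<gamma> j n = walk_dist C \<gamma> (-j) n)"

definition dist_equiv :: "complex^2^2 \<Rightarrow> complex^2 \<Rightarrow> complex^2^2 \<Rightarrow> complex^2 \<Rightarrow> bool" where
  "dist_equiv C1 \<gamma>1 C2 \<gamma>2 \<longleftrightarrow> (\<forall>j n. walk_dist C1 \<gamma>1 j n = walk_dist C2 \<gamma>2 j n)"

definition coin_theta :: "real \<Rightarrow> complex^2^2" where
  "coin_theta \<theta> = (\<chi> r c. if r = c then complex_of_real (cos \<theta>)
                         else if r = up then complex_of_real (sin \<theta>)
                         else - complex_of_real (sin \<theta>))"

definition gamma_star :: "complex^2" where
  "gamma_star = (\<chi> s. if s = up then complex_of_real (1 / sqrt 2)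
                      else \<i> * complex_of_real (1 / sqrt 2))"

end

theory Submission
  imports Defs
begin


lemma up_down [simp]: "up = 1" "down = 2" by (simp_all add: up_def down_def)
lemma one_neq_two2 [simp]: "(1::2) \<noteq> 2" "(2::2) \<noteq> 1" by simp_all

lemma ws_0: "walk_state C g 0 = (\<lambda>j. if j = 0 then g else 0)"
  by (simp add: walk_state_def)
lemma ws_Suc: "walk_state C g (Suc n) = walk_step C (walk_state C g n)"
  by (simp add: walk_state_def)

lemma step1: "walk_step C \<psi> j $ 1 = C$1$1 * \<psi> (j-1) $ 1 + C$1$2 * \<psi> (j-1) $ 2"
  by (simp add: walk_step_def matrix_vector_mult_def sum_2)
lemma step2: "walk_step C \<psi> j $ 2 = C$2$1 * \<psi> (j+1) $ 1 + C$2$2 * \<psi> (j+1) $ 2"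
  by (simp add: walk_step_def matrix_vector_mult_def sum_2)

lemma norm2_vec2: "(norm (w::complex^2))\<^sup>2 = (cmod (w$1))\<^sup>2 + (cmod (w$2))\<^sup>2"
  by (simp add: norm_vec_def L2_set_def sum_2)

lemma wd: "walk_dist C g j n = (cmod (walk_state C g n j $ 1))\<^sup>2 + (cmod (walk_state C g n j $ 2))\<^sup>2"
  by (simp add: walk_dist_def norm2_vec2)

lemma ct [simp]: "coin_theta t $ 1 $ 1 = cos t" "coin_theta t $ 1 $ 2 = sin t"
  "coin_theta t $ 2 $ 1 = - sin t" "coin_theta t $ 2 $ 2 = cos t"
  by (simp_all add: coin_theta_def)

lemma gs [simp]: "gamma_star $ 1 = 1 / sqrt 2" "gamma_star $ 2 = \<i> / sqrt 2"
  by (simp_all add: gamma_star_def)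


lemma ws_zero_init: "walk_state C g 0 j $ k = (if j = 0 then g $ k else 0)"
  by (simp add: ws_0)

lemma ws_Suc1: "walk_state C g (Suc n) j $ 1 = C$1$1 * walk_state C g n (j-1) $ 1 + C$1$2 * walk_state C g n (j-1) $ 2"
  by (simp add: ws_Suc step1)
lemma ws_Suc2: "walk_state C g (Suc n) j $ 2 = C$2$1 * walk_state C g n (j+1) $ 1 + C$2$2 * walk_state C g n (j+1) $ 2"
  by (simp add: ws_Suc step2)

lemma ws_comp_induct:
  assumes "\<And>j k. P 0 j k" "\<And>n j. (\<And>j k. P n j k) \<Longrightarrow> P (Suc n) j 1"
     "\<And>n j. (\<And>j k. P n j k) \<Longrightarrow> P (Suc n) j 2"
  shows "P n j (k::2)"
proof -
  have "\<forall>j k. P n j k"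
  proof (induction n)
    case 0 show ?case using assms(1) by blast
  next
    case (Suc n) then have h: "\<And>j k. P n j k" by blast
    show ?case
    proof (intro allI)
      fix j and k :: 2
      show "P (Suc n) j k" using exhaust_2[of k] assms(2)[OF h] assms(3)[OF h] by auto
    qed
  qed
  thus ?thesis by blast
qed

lemma ws_scale: "walk_state A (\<chi> k. l * g $ k) n j $ k = l * walk_state A g n j $ k"
  by (induction n j k rule: ws_comp_induct) (simp_all add: ws_zero_init ws_Suc1 ws_Suc2 algebra_simps)

lemma ws_conj:
  assumes "\<And>r c. cnj (A $ r $ c) = A $ r $ c"
  shows "walk_state A (\<chi> k. cnj (g $ k)) n j $ k = cnj (walk_state A g n j $ k)"
  by (induction n j k rule: ws_comp_induct) (simp_all add: ws_zero_init ws_Suc1 ws_Suc2 assms)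

lemma ws_right:
  assumes "\<And>r c. L $ r $ c = e r * A $ r $ c" "\<And>r c. R $ r $ c = A $ r $ c * e c"
  shows "walk_state L (\<chi> k. e k * g $ k) n j $ k = e k * walk_state R g n j $ k"
  by (induction n j k rule: ws_comp_induct) (simp_all add: ws_zero_init ws_Suc1 ws_Suc2 assms algebra_simps)

lemma ws_left:
  assumes "v \<noteq> 0" "\<And>c. B $ 1 $ c = u * v * A $ 1 $ c" "\<And>c. B $ 2 $ c = u / v * A $ 2 $ c"
  shows "walk_state B g n j $ k = u ^ n * v powi j * walk_state A g n j $ k"
proof (induction n j k rule: ws_comp_induct)
  case (1 j k) then show ?case by (simp add: ws_zero_init)
next
  case (2 n j)
  have e: "v powi (j - 1) * v = v powi j" using assms power_int_minus_mult by blast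
  show ?case by (simp add: ws_Suc1 2 assms algebra_simps flip: e)
next
  case (3 n j)
  have e: "v powi (1 + j) = v powi j * v" using assms power_int_add_1 by (metis add.commute)
  show ?case using assms(1) by (simp add: ws_Suc2 3 e assms field_simps)
qed

lemma ws_refl:
  assumes "A$1$1 = A$2$2" "A$1$2 = - A$2$1"
  shows "walk_state A (\<chi> k. if k = 1 then - g$2 else g$1) n j $ k
     = (if k = 1 then - walk_state A g n (-j) $ 2 else walk_state A g n (-j) $ 1)"
proof (induction n j k rule: ws_comp_induct)
  case (1 j k) then show ?case by (auto simp add: ws_zero_init)
next
  case (2 n j)
  have "- (j - 1) = - j + 1" by simp
  then show ?case by (simp add: ws_Suc1 ws_Suc2 2 assms algebra_simps)
next
  case (3 n j)
  have e: "- (j + 1) = - j - 1" by simp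
  show ?case by (simp only: ws_Suc1 ws_Suc2 3 e) (simp add: assms algebra_simps)
qed


lemma ws_small:
  "walk_state C g (Suc 0) 1 $ 1 = C$1$1 * g$1 + C$1$2 * g$2"
  "walk_state C g (Suc 0) 1 $ 2 = 0"
  "walk_state C g (Suc 0) (-1) $ 1 = 0"
  "walk_state C g (Suc 0) (-1) $ 2 = C$2$1 * g$1 + C$2$2 * g$2"
  "walk_state C g (Suc (Suc 0)) 2 $ 1 = C$1$1 * (C$1$1 * g$1 + C$1$2 * g$2)"
  "walk_state C g (Suc (Suc 0)) 2 $ 2 = 0"
  "walk_state C g (Suc (Suc (Suc 0))) 1 $ 1 = C$1$1 * C$1$2 * (C$2$1 * g$1 + C$2$2 * g$2) + C$1$2 * C$2$1 * (C$1$1 * g$1 + C$1$2 * g$2)"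
  "walk_state C g (Suc (Suc (Suc 0))) 1 $ 2 = C$2$1 * C$1$1 * (C$1$1 * g$1 + C$1$2 * g$2)"
  "walk_state C g (Suc (Suc (Suc 0))) (-1) $ 1 = C$1$2 * C$2$2 * (C$2$1 * g$1 + C$2$2 * g$2)"
  "walk_state C g (Suc (Suc (Suc 0))) (-1) $ 2 = C$2$1 * C$1$2 * (C$2$1 * g$1 + C$2$2 * g$2) + C$2$2 * C$2$1 * (C$1$1 * g$1 + C$1$2 * g$2)"
  by (simp_all add: ws_Suc1 ws_Suc2 ws_zero_init algebra_simps)

lemma part1: "symmetric_in_distribution (coin_theta t) gamma_star"
proof -
  let ?g = gamma_star and ?C = "coin_theta t"
  have q: "(\<chi> k. if k = 1 then - ?g$2 else ?g$1) = (\<chi> k. (- \<i>) * ?g $ k)"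
    by (simp add: vec_eq_iff forall_2)
  have r: "walk_state ?C (\<chi> k. if k = 1 then - ?g$2 else ?g$1) n j $ k
     = (if k = 1 then - walk_state ?C ?g n (-j) $ 2 else walk_state ?C ?g n (-j) $ 1)" for n j k
    by (rule ws_refl) simp_all
  have s: "walk_state ?C (\<chi> k. if k = 1 then - ?g$2 else ?g$1) n j $ k = (- \<i>) * walk_state ?C ?g n j $ k" for n j k
    unfolding q by (rule ws_scale)
  have a: "cmod (walk_state ?C ?g n j $ 1) = cmod (walk_state ?C ?g n (-j) $ 2)" for n j
  proof -
    have e: "walk_state ?C ?g n (-j) $ 2 = \<i> * walk_state ?C ?g n j $ 1" using r[of n j 1] s[of n j 1] by simp
    show ?thesis by (simp add: e norm_mult)
  qed
  have b: "cmod (walk_state ?C ?g n j $ 2) = cmod (walk_state ?C ?g n (-j) $ 1)" for n j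
  proof -
    have e: "walk_state ?C ?g n (-j) $ 1 = - \<i> * walk_state ?C ?g n j $ 2" using r[of n j 2] s[of n j 2] by simp
    show ?thesis by (simp add: e norm_mult)
  qed
  show ?thesis unfolding symmetric_in_distribution_def wd using a b by simp
qed

lemma p22: "walk_dist (coin_theta t) gamma_star 2 2 = (cos t)\<^sup>2 / 2"
proof -
  have "walk_dist (coin_theta t) gamma_star 2 2 = walk_dist (coin_theta t) gamma_star 2 (Suc (Suc 0))"
    by (simp add: numeral_2_eq_2)
  also have "\<dots> = (cmod (cos t * (cos t * (1 / sqrt 2) + sin t * (\<i> / sqrt 2))))\<^sup>2"
    unfolding wd ws_small by simp
  also have "\<dots> = (cos t)\<^sup>2 / 2"
  proof -
    have "(cmod (cos t * (cos t * (1 / sqrt 2) + sin t * (\<i> / sqrt 2))))\<^sup>2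
       = (cos t * cos t / sqrt 2)\<^sup>2 + (cos t * sin t / sqrt 2)\<^sup>2"
      by (simp add: cmod_power2)
    also have "\<dots> = ((cos t)\<^sup>2 * (cos t)\<^sup>2 + (cos t)\<^sup>2 * (sin t)\<^sup>2) / 2"
      by (simp add: power_mult_distrib power_divide add_divide_distrib)
    also have "\<dots> = (cos t)\<^sup>2 * ((cos t)\<^sup>2 + (sin t)\<^sup>2) / 2"
      by (simp only: distrib_left)
    also have "\<dots> = (cos t)\<^sup>2 / 2" by simp
    finally show ?thesis .
  qed
  finally show ?thesis .
qed



lemma part3:
  assumes "t \<in> {0..pi/2}" "t' \<in> {0..pi/2}"
    "dist_equiv (coin_theta t) gamma_star (coin_theta t') gamma_star"
  shows "t = t'"
proof -
  have "(cos t)\<^sup>2 / 2 = (cos t')\<^sup>2 / 2"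
    using assms(3) unfolding dist_equiv_def p22[symmetric] by blast
  then have "(cos t)\<^sup>2 = (cos t')\<^sup>2" by simp
  moreover have "0 \<le> cos t" "0 \<le> cos t'" using assms(1,2) by (auto intro!: cos_ge_zero)
  ultimately have "cos t = cos t'" using power2_eq_iff_nonneg by blast
  moreover have "0 \<le> t" "t \<le> pi" "0 \<le> t'" "t' \<le> pi" using assms(1,2) pi_gt_zero by auto
  ultimately show ?thesis using cos_inj_pi by blast
qed

lemma wd_left:
  assumes "cmod d1 = 1" "cmod d2 = 1" "\<And>c. B $ 1 $ c = d1 * A $ 1 $ c" "\<And>c. B $ 2 $ c = d2 * A $ 2 $ c"
  shows "walk_dist B g j n = walk_dist A g j n"
proof -
  define v where "v = csqrt (d1 / d2)"
  define u where "u = d1 / v"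
  have d0: "d1 \<noteq> 0" "d2 \<noteq> 0" using assms(1,2) by auto
  have v0: "v \<noteq> 0" using d0 by (simp add: v_def)
  have v2: "v * v = d1 / d2" unfolding v_def by (metis power2_csqrt power2_eq_square)
  have nv: "cmod v = 1" using assms(1,2) by (simp add: v_def norm_divide)
  have nu: "cmod u = 1" using assms(1) nv by (simp add: u_def norm_divide)
  have uv1: "u * v = d1" using v0 by (simp add: u_def)
  have uv2: "u / v = d2" using v0 d0 v2 by (simp add: u_def field_simps)
  have ws: "walk_state B g n j $ k = u ^ n * v powi j * walk_state A g n j $ k" for k
    by (rule ws_left[OF v0]) (simp_all add: assms uv1 uv2)
  have nf: "cmod (u ^ n) * cmod (v powi j) = 1" using nu nv by (simp add: norm_power norm_power_int)
  show ?thesis unfolding wd ws by (simp add: norm_mult nf)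
qed

lemma wd_right:
  assumes "\<And>k. cmod (e k) = 1"
  shows "walk_dist (\<chi> r c. A $ r $ c * e c) g j n = walk_dist A (\<chi> k. e k * g $ k) j n"
proof -
  have ws: "walk_state (\<chi> r c. e r * A $ r $ c) (\<chi> k. e k * g $ k) n j $ k
      = e k * walk_state (\<chi> r c. A $ r $ c * e c) g n j $ k" for k
    by (rule ws_right[where A=A]) simp_all
  have "walk_dist (\<chi> r c. A $ r $ c * e c) g j n = walk_dist (\<chi> r c. e r * A $ r $ c) (\<chi> k. e k * g $ k) j n"
    unfolding wd ws by (simp add: norm_mult assms)
  also have "\<dots> = walk_dist A (\<chi> k. e k * g $ k) j n"
    by (rule wd_left[of "e 1" "e 2"]) (simp_all add: assms)
  finally show ?thesis .
qed

lemma wd_scale: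
  assumes "cmod l = 1"
  shows "walk_dist A (\<chi> k. l * g $ k) j n = walk_dist A g j n"
  unfolding wd ws_scale by (simp add: norm_mult assms)

lemma wd_conj:
  assumes "\<And>r c. cnj (A $ r $ c) = A $ r $ c"
  shows "walk_dist A (\<chi> k. cnj (g $ k)) j n = walk_dist A g j n"
  unfolding wd ws_conj[OF assms] by simp



lemma unitary_entries:
  assumes "unitary2 C"
  shows "cnj (C$1$1) * C$1$1 + cnj (C$2$1) * C$2$1 = 1"
    "cnj (C$1$2) * C$1$2 + cnj (C$2$2) * C$2$2 = 1"
    "C$1$1 * cnj (C$1$1) + C$1$2 * cnj (C$1$2) = 1"
    "C$1$1 * cnj (C$2$1) + C$1$2 * cnj (C$2$2) = 0"
proof -
  have A: "adj_mat C ** C = mat 1" and B: "C ** adj_mat C = mat 1" using assms by (auto simp: unitary2_def)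
  have A': "(adj_mat C ** C) $ i $ j = (mat 1 :: complex^2^2) $ i $ j" for i j using A by simp
  have B': "(C ** adj_mat C) $ i $ j = (mat 1 :: complex^2^2) $ i $ j" for i j using B by simp
  have "(adj_mat C ** C) $ 1 $ 1 = 1" "(adj_mat C ** C) $ 2 $ 2 = 1"
       "(C ** adj_mat C) $ 1 $ 1 = 1" "(C ** adj_mat C) $ 1 $ 2 = 0"
    using A'[of 1 1] A'[of 2 2] B'[of 1 1] B'[of 1 2] by (simp_all add: mat_def)
  then show "cnj (C$1$1) * C$1$1 + cnj (C$2$1) * C$2$1 = 1"
    "cnj (C$1$2) * C$1$2 + cnj (C$2$2) * C$2$2 = 1"
    "C$1$1 * cnj (C$1$1) + C$1$2 * cnj (C$1$2) = 1"
    "C$1$1 * cnj (C$2$1) + C$1$2 * cnj (C$2$2) = 0"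
    by (simp_all add: matrix_matrix_mult_def adj_mat_def sum_2 mat_def)
qed

lemma nsq: "cnj z * z = complex_of_real ((cmod z)\<^sup>2)" "z * cnj z = complex_of_real ((cmod z)\<^sup>2)"
  by (metis complex_norm_square mult.commute)+

lemma decomp:
  assumes "unitary2 C"
  shows "\<exists>t d e. t \<in> {0..pi/2} \<and> (\<forall>k. cmod (d k) = 1) \<and> (\<forall>k. cmod (e k) = 1) \<and>
     (\<forall>r c. C $ r $ c = d r * (coin_theta t $ r $ c * e c))"
proof -
  define a where "a = C$1$1"
  define b where "b = C$1$2"
  define p where "p = C$2$1"
  define q where "q = C$2$2"
  note U = unitary_entries[OF assms, folded a_def b_def p_def q_def]
  have E1: "(cmod a)\<^sup>2 + (cmod p)\<^sup>2 = 1" using U(1) unfolding nsq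
    by (metis of_real_add of_real_eq_1_iff)
  have E2: "(cmod b)\<^sup>2 + (cmod q)\<^sup>2 = 1" using U(2) unfolding nsq
    by (metis of_real_add of_real_eq_1_iff)
  have F1: "(cmod a)\<^sup>2 + (cmod b)\<^sup>2 = 1" using U(3) unfolding nsq
    by (metis of_real_add of_real_eq_1_iff)
  have F3: "cnj a * p + cnj b * q = 0" using arg_cong[OF U(4), of cnj] by simp
  have np: "cmod p = cmod b" using E1 F1 by (metis add_left_cancel norm_ge_zero power2_eq_iff_nonneg)
  have nq: "cmod q = cmod a" using E2 F1 by (metis add.commute add_left_cancel norm_ge_zero power2_eq_iff_nonneg)
  define c where "c = cmod a"
  define s where "s = cmod b"
  have c01: "0 \<le> c" "c \<le> 1" using F1 unfolding c_def
    by (auto, metis abs_norm_cancel abs_square_le_1 le_add_same_cancel1 zero_le_power2)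
  define t where "t = arccos c"
  have t: "t \<in> {0..pi/2}" using c01 arccos_lbound[of c] arccos_le_pi2[of c] unfolding t_def by auto
  have ct: "cos t = c" using c01 by (simp add: t_def)
  have st: "sin t = s"
  proof -
    have "sin t = sqrt (1 - c\<^sup>2)" using c01 by (simp add: t_def sin_arccos)
    also have "1 - c\<^sup>2 = s\<^sup>2" using F1 by (simp add: c_def s_def)
    finally show ?thesis by (simp add: s_def)
  qed
  show ?thesis
  proof (cases "c = 0")
    case True
    then have a0: "a = 0" "q = 0" using nq by (auto simp: c_def)
    have "s\<^sup>2 = 1\<^sup>2" using F1 True unfolding c_def s_def by simp
    then have s1: "s = 1" using power2_eq_iff_nonneg[of s 1] by (simp add: s_def)
    define d where "d = (\<lambda>k::2. if k = 1 then 1 else - p)"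
    define e where "e = (\<lambda>k::2. if k = 1 then 1 else b)"
    have "\<forall>r c. C $ r $ c = d r * (coin_theta t $ r $ c * e c)"
      unfolding forall_2 d_def e_def using a0 ct st True s1 by (simp add: a_def b_def p_def q_def)
    moreover have "\<forall>k. cmod (d k) = 1" "\<forall>k. cmod (e k) = 1"
      unfolding forall_2 d_def e_def using s1 np by (simp_all add: s_def)
    ultimately show ?thesis using t by blast
  next
    case False
    show ?thesis
    proof (cases "s = 0")
      case True
      then have b0: "b = 0" "p = 0" using np by (auto simp: s_def)
      have "c\<^sup>2 = 1\<^sup>2" using F1 True unfolding c_def s_def by simp
      then have c1: "c = 1" using power2_eq_iff_nonneg[of c 1] c01 by simp
      define d where "d = (\<lambda>k::2. if k = 1 then a else q)"
      define e where "e = (\<lambda>k::2. 1::complex)"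
      have "\<forall>r c. C $ r $ c = d r * (coin_theta t $ r $ c * e c)"
        unfolding forall_2 d_def e_def using b0 ct st True c1 by (simp add: a_def b_def p_def q_def)
      moreover have "\<forall>k. cmod (d k) = 1" "\<forall>k. cmod (e k) = 1"
        unfolding forall_2 d_def e_def using c1 nq by (simp_all add: c_def)
      ultimately show ?thesis using t by blast
    next
      case sF: False
      have a0: "a \<noteq> 0" using False by (auto simp: c_def)
      have b0: "b \<noteq> 0" using sF by (auto simp: s_def)
      define d where "d = (\<lambda>k::2. if k = 1 then a / c else - p / s)"
      define e where "e = (\<lambda>k::2. if k = 1 then 1 else b * c / (a * s))"
      have qq: "q = - cnj a * p / cnj b" using F3 b0 by (simp add: field_simps add_eq_0_iff)
      have cc: "complex_of_real (c * c) = a * cnj a" unfolding c_def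
        by (metis complex_norm_square power2_eq_square)
      have ss: "complex_of_real (s * s) = b * cnj b" unfolding s_def
        by (metis complex_norm_square power2_eq_square)
      have e22: "q = d 2 * (complex_of_real c * e 2)"
      proof -
        have "d 2 * (complex_of_real c * e 2) = - p * b * (c * c) / (a * (s * s))"
          unfolding d_def e_def by (simp add: ac_simps)
        also have "\<dots> = - p * b * (a * cnj a) / (a * (b * cnj b))" by (simp only: cc ss)
        also have "\<dots> = q" using a0 b0 qq by (simp add: field_simps)
        finally show ?thesis by simp
      qed
      have "\<forall>r c. C $ r $ c = d r * (coin_theta t $ r $ c * e c)"
        unfolding forall_2 using e22 ct st False sF a0
        by (simp add: d_def e_def a_def[symmetric] b_def[symmetric] p_def[symmetric] q_def[symmetric])
      moreover have "\<forall>k. cmod (d k) = 1" "\<forall>k. cmod (e k) = 1"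
        unfolding forall_2 d_def e_def using False sF np a0 b0
        by (simp_all add: c_def s_def norm_divide norm_mult)
      ultimately show ?thesis using t by blast
    qed
  qed
qed



lemma dists_theta:
  fixes t :: real and g :: "complex^2"
  defines "c \<equiv> cos t" and "s \<equiv> sin t"
  defines "x1 \<equiv> Re (g$1)" and "x2 \<equiv> Im (g$1)" and "y1 \<equiv> Re (g$2)" and "y2 \<equiv> Im (g$2)"
  shows "walk_dist (coin_theta t) g 1 1 = (c*x1+s*y1)\<^sup>2 + (c*x2+s*y2)\<^sup>2"
    "walk_dist (coin_theta t) g (-1) 1 = (-s*x1+c*y1)\<^sup>2 + (-s*x2+c*y2)\<^sup>2"
    "walk_dist (coin_theta t) g 1 3 = (c* s*(-s*x1+c*y1) - s* s*(c*x1+s*y1))\<^sup>2 + (c* s*(-s*x2+c*y2) - s* s*(c*x2+s*y2))\<^sup>2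
        + (s*c*(c*x1+s*y1))\<^sup>2 + (s*c*(c*x2+s*y2))\<^sup>2"
    "walk_dist (coin_theta t) g (-1) 3 = (s*c*(-s*x1+c*y1))\<^sup>2 + (s*c*(-s*x2+c*y2))\<^sup>2
        + (-s* s*(-s*x1+c*y1) - c* s*(c*x1+s*y1))\<^sup>2 + (-s* s*(-s*x2+c*y2) - c* s*(c*x2+s*y2))\<^sup>2"
proof -
  have n1: "(1::nat) = Suc 0" and n3: "(3::nat) = Suc (Suc (Suc 0))" by simp_all
  show "walk_dist (coin_theta t) g 1 1 = (c*x1+s*y1)\<^sup>2 + (c*x2+s*y2)\<^sup>2"
    unfolding n1 wd ws_small by (simp add: cmod_power2 assms)
  show "walk_dist (coin_theta t) g (-1) 1 = (-s*x1+c*y1)\<^sup>2 + (-s*x2+c*y2)\<^sup>2"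
    unfolding n1 wd ws_small by (simp add: cmod_power2 assms)
  show "walk_dist (coin_theta t) g 1 3 = (c* s*(-s*x1+c*y1) - s* s*(c*x1+s*y1))\<^sup>2 + (c* s*(-s*x2+c*y2) - s* s*(c*x2+s*y2))\<^sup>2
        + (s*c*(c*x1+s*y1))\<^sup>2 + (s*c*(c*x2+s*y2))\<^sup>2"
    unfolding n3 wd ws_small cmod_power2 by (simp add: assms power2_eq_square algebra_simps)
  show "walk_dist (coin_theta t) g (-1) 3 = (s*c*(-s*x1+c*y1))\<^sup>2 + (s*c*(-s*x2+c*y2))\<^sup>2
        + (-s* s*(-s*x1+c*y1) - c* s*(c*x1+s*y1))\<^sup>2 + (-s* s*(-s*x2+c*y2) - c* s*(c*x2+s*y2))\<^sup>2"
    unfolding n3 wd ws_small cmod_power2 by (simp add: assms power2_eq_square algebra_simps)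
qed

lemma alg_main:
  fixes c s x1 x2 y1 y2 :: real
  assumes cs: "c\<^sup>2 + s\<^sup>2 = 1"
  and h1: "(c*x1+s*y1)\<^sup>2 + (c*x2+s*y2)\<^sup>2 = (-s*x1+c*y1)\<^sup>2 + (-s*x2+c*y2)\<^sup>2"
  and h3: "(c* s*(-s*x1+c*y1) - s* s*(c*x1+s*y1))\<^sup>2 + (c* s*(-s*x2+c*y2) - s* s*(c*x2+s*y2))\<^sup>2
        + (s*c*(c*x1+s*y1))\<^sup>2 + (s*c*(c*x2+s*y2))\<^sup>2
      = (s*c*(-s*x1+c*y1))\<^sup>2 + (s*c*(-s*x2+c*y2))\<^sup>2
        + (-s* s*(-s*x1+c*y1) - c* s*(c*x1+s*y1))\<^sup>2 + (-s* s*(-s*x2+c*y2) - c* s*(c*x2+s*y2))\<^sup>2"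
  shows "x1\<^sup>2 + x2\<^sup>2 = y1\<^sup>2 + y2\<^sup>2" "c * s \<noteq> 0 \<Longrightarrow> x1*y1 + x2*y2 = 0"
proof -
  define U where "U = (c*x1+s*y1)\<^sup>2 + (c*x2+s*y2)\<^sup>2"
  define V where "V = (-s*x1+c*y1)\<^sup>2 + (-s*x2+c*y2)\<^sup>2"
  define R where "R = (c*x1+s*y1)*(-s*x1+c*y1) + (c*x2+s*y2)*(-s*x2+c*y2)"
  define D where "D = x1\<^sup>2 + x2\<^sup>2 - (y1\<^sup>2 + y2\<^sup>2)"
  define E where "E = x1*y1 + x2*y2"
  have UV: "U = V" using h1 by (simp add: U_def V_def)
  have i3: "(c* s*(-s*x1+c*y1) - s* s*(c*x1+s*y1))\<^sup>2 + (c* s*(-s*x2+c*y2) - s* s*(c*x2+s*y2))\<^sup>2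
        + (s*c*(c*x1+s*y1))\<^sup>2 + (s*c*(c*x2+s*y2))\<^sup>2
      - ((s*c*(-s*x1+c*y1))\<^sup>2 + (s*c*(-s*x2+c*y2))\<^sup>2
        + (-s* s*(-s*x1+c*y1) - c* s*(c*x1+s*y1))\<^sup>2 + (-s* s*(-s*x2+c*y2) - c* s*(c*x2+s*y2))\<^sup>2)
      = s\<^sup>2 * (s\<^sup>2 * (U - V) - 4*c* s*R)"
    unfolding U_def V_def R_def by (simp add: power2_eq_square algebra_simps)
  have R3: "s\<^sup>2 * (c * s * R) = 0" using i3 h3 UV by simp
  have iD: "D * (c\<^sup>2 + s\<^sup>2)\<^sup>2 = (c\<^sup>2 - s\<^sup>2) * (U - V) - 4*c* s*R"
    unfolding U_def V_def R_def D_def by (simp add: power2_eq_square algebra_simps)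
  have iE: "E * (c\<^sup>2 + s\<^sup>2)\<^sup>2 = c* s*(U - V) + (c\<^sup>2 - s\<^sup>2)*R"
    unfolding U_def V_def R_def E_def by (simp add: power2_eq_square algebra_simps)
  have csR: "c * s * R = 0" using R3 by (cases "s = 0") auto
  have "D = 0" using iD cs UV csR by simp
  then show "x1\<^sup>2 + x2\<^sup>2 = y1\<^sup>2 + y2\<^sup>2" by (simp add: D_def)
  assume "c * s \<noteq> 0"
  then have "R = 0" using csR by simp
  then show "x1*y1 + x2*y2 = 0" using iE cs UV by (simp add: E_def)
qed

lemma alg_rot:
  fixes x1 x2 y1 y2 :: real
  assumes "x1\<^sup>2 + x2\<^sup>2 = 1/2" "y1\<^sup>2 + y2\<^sup>2 = 1/2" "x1*y1 + x2*y2 = 0"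
  shows "(y1 = - x2 \<and> y2 = x1) \<or> (y1 = x2 \<and> y2 = - x1)"
proof -
  have id1: "((y1 + x2)\<^sup>2 + (y2 - x1)\<^sup>2) * ((y1 - x2)\<^sup>2 + (y2 + x1)\<^sup>2)
     = (x1\<^sup>2 + x2\<^sup>2 + y1\<^sup>2 + y2\<^sup>2)\<^sup>2 - 4 * ((x1\<^sup>2 + x2\<^sup>2) * (y1\<^sup>2 + y2\<^sup>2) - (x1*y1 + x2*y2)\<^sup>2)"
    by (simp add: power2_eq_square algebra_simps)
  have s1: "x1\<^sup>2 + x2\<^sup>2 + y1\<^sup>2 + y2\<^sup>2 = 1" using assms(1,2) by linarith
  have "((y1 + x2)\<^sup>2 + (y2 - x1)\<^sup>2) * ((y1 - x2)\<^sup>2 + (y2 + x1)\<^sup>2) = 0"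
    unfolding id1 s1 unfolding assms by simp
  then have "(y1 + x2)\<^sup>2 + (y2 - x1)\<^sup>2 = 0 \<or> (y1 - x2)\<^sup>2 + (y2 + x1)\<^sup>2 = 0" by simp
  then show ?thesis
    unfolding sum_power2_eq_zero_iff by auto
qed



lemma unit_sqrt2:
  assumes "(cmod z)\<^sup>2 = 1/2"
  shows "cmod (complex_of_real (sqrt 2) * z) = 1"
proof -
  have "(cmod (complex_of_real (sqrt 2) * z))\<^sup>2 = 1\<^sup>2"
    by (simp add: norm_mult power_mult_distrib assms)
  then show ?thesis using power2_eq_iff_nonneg[of "cmod (complex_of_real (sqrt 2) * z)" 1] by simp
qed

lemma ct_real: "cnj (coin_theta t $ r $ c) = coin_theta t $ r $ c"
  by (simp add: coin_theta_def)

lemma sym_theta_equiv: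
  assumes t: "t \<in> {0..pi/2}" and ng: "norm g = 1"
    and sym: "symmetric_in_distribution (coin_theta t) g"
  shows "dist_equiv (coin_theta t) g (coin_theta t) gamma_star"
proof -
  define x1 where "x1 = Re (g$1)"
  define x2 where "x2 = Im (g$1)"
  define y1 where "y1 = Re (g$2)"
  define y2 where "y2 = Im (g$2)"
  note DT = dists_theta[of t g, folded x1_def x2_def y1_def y2_def]
  have h1: "walk_dist (coin_theta t) g 1 1 = walk_dist (coin_theta t) g (-1) 1"
    using sym unfolding symmetric_in_distribution_def by blast
  have h3: "walk_dist (coin_theta t) g 1 3 = walk_dist (coin_theta t) g (-1) 3"
    using sym unfolding symmetric_in_distribution_def by blast
  note AM = alg_main[of "cos t" "sin t" x1 y1 x2 y2, OF _ h1[unfolded DT] h3[unfolded DT]]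
  have D: "x1\<^sup>2 + x2\<^sup>2 = y1\<^sup>2 + y2\<^sup>2" using AM(1) by simp
  have "(norm g)\<^sup>2 = 1" using ng by simp
  then have N: "x1\<^sup>2 + x2\<^sup>2 + (y1\<^sup>2 + y2\<^sup>2) = 1"
    unfolding norm2_vec2 cmod_power2 x1_def x2_def y1_def y2_def by simp
  have X: "x1\<^sup>2 + x2\<^sup>2 = 1/2" and Y: "y1\<^sup>2 + y2\<^sup>2 = 1/2" using D N by linarith+
  have cx: "(cmod (g$1))\<^sup>2 = 1/2" using X by (simp add: cmod_power2 x1_def x2_def)
  have cy: "(cmod (g$2))\<^sup>2 = 1/2" using Y by (simp add: cmod_power2 y1_def y2_def)
  show ?thesis
  proof (cases "cos t * sin t = 0")
    case False
    have E: "x1 * y1 + x2 * y2 = 0" using AM(2) False by simp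
    define l where "l = complex_of_real (sqrt 2) * g$1"
    have nl: "cmod l = 1" unfolding l_def by (rule unit_sqrt2[OF cx])
    from alg_rot[OF X Y E] show ?thesis
    proof
      assume r: "y1 = - x2 \<and> y2 = x1"
      have g2: "g$2 = \<i> * g$1" using r by (simp add: complex_eq_iff x1_def x2_def y1_def y2_def)
      have geq: "g = (\<chi> k. l * gamma_star $ k)"
        unfolding vec_eq_iff forall_2 using g2 by (simp add: l_def)
      show ?thesis unfolding dist_equiv_def geq wd_scale[OF nl] by simp
    next
      assume r: "y1 = x2 \<and> y2 = - x1"
      have g2: "g$2 = - \<i> * g$1" using r by (simp add: complex_eq_iff x1_def x2_def y1_def y2_def)
      have geq: "g = (\<chi> k. cnj (cnj l * gamma_star $ k))"
        unfolding vec_eq_iff forall_2 using g2 by (simp add: l_def)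
      have nl': "cmod (cnj l) = 1" using nl by simp
      have "walk_dist (coin_theta t) g j n = walk_dist (coin_theta t) gamma_star j n" for j n
      proof -
        have "walk_dist (coin_theta t) g j n
            = walk_dist (coin_theta t) (\<chi> k. cnj ((\<chi> k. cnj l * gamma_star $ k) $ k)) j n"
          by (subst geq) simp
        also have "\<dots> = walk_dist (coin_theta t) (\<chi> k. cnj l * gamma_star $ k) j n"
          by (rule wd_conj[OF ct_real])
        also have "\<dots> = walk_dist (coin_theta t) gamma_star j n"
          by (rule wd_scale[OF nl'])
        finally show ?thesis .
      qed
      then show ?thesis unfolding dist_equiv_def by blast
    qed
  next
    case True
    define e where "e = (\<lambda>k::2. if k = 1 then complex_of_real (sqrt 2) * g$1
                                   else - \<i> * (complex_of_real (sqrt 2) * g$2))"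
    have ne: "cmod (e k) = 1" for k
      using unit_sqrt2[OF cx] unit_sqrt2[OF cy] by (simp add: e_def norm_mult)
    have geq: "g = (\<chi> k. e k * gamma_star $ k)"
      unfolding vec_eq_iff forall_2 by (simp add: e_def algebra_simps)
    have "walk_dist (coin_theta t) g j n = walk_dist (coin_theta t) gamma_star j n" for j n
    proof -
      have "walk_dist (coin_theta t) g j n = walk_dist (\<chi> r c. coin_theta t $ r $ c * e c) gamma_star j n"
        unfolding geq by (rule wd_right[symmetric]) (rule ne)
      also have "\<dots> = walk_dist (coin_theta t) gamma_star j n"
      proof (cases "cos t = 0")
        case True
        show ?thesis
        proof (rule wd_left[of "e 2" "e 1"])
          fix c :: 2
          show "(\<chi> r c. coin_theta t $ r $ c * e c) $ 1 $ c = e 2 * coin_theta t $ 1 $ c"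
            using exhaust_2[of c] True by auto
          show "(\<chi> r c. coin_theta t $ r $ c * e c) $ 2 $ c = e 1 * coin_theta t $ 2 $ c"
            using exhaust_2[of c] True by auto
        qed (use ne in auto)
      next
        case False
        then have "sin t = 0" using \<open>cos t * sin t = 0\<close> by simp
        show ?thesis
        proof (rule wd_left[of "e 1" "e 2"])
          fix c :: 2
          show "(\<chi> r c. coin_theta t $ r $ c * e c) $ 1 $ c = e 1 * coin_theta t $ 1 $ c"
            using exhaust_2[of c] \<open>sin t = 0\<close> by auto
          show "(\<chi> r c. coin_theta t $ r $ c * e c) $ 2 $ c = e 2 * coin_theta t $ 2 $ c"
            using exhaust_2[of c] \<open>sin t = 0\<close> by auto
        qed (use ne in auto)
      qed
      finally show ?thesis .
    qed
    then show ?thesis unfolding dist_equiv_def by blast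
  qed
qed



lemma part2:
  assumes "coin_setup C g" "symmetric_in_distribution C g"
  shows "\<exists>t\<in>{0..pi/2}. dist_equiv C g (coin_theta t) gamma_star"
proof -
  have U: "unitary2 C" and ng: "norm g = 1" using assms(1) by (auto simp: coin_setup_def)
  obtain t d e where t: "t \<in> {0..pi/2}" and nd: "\<forall>k. cmod (d k) = 1" and ne: "\<forall>k. cmod (e k) = 1"
    and Ce: "\<forall>r c. C $ r $ c = d r * (coin_theta t $ r $ c * e c)"
    using decomp[OF U] by blast
  define g' where "g' = (\<chi> k. e k * g $ k)"
  have W: "walk_dist C g j n = walk_dist (coin_theta t) g' j n" for j n
  proof -
    have "walk_dist C g j n = walk_dist (\<chi> r c. coin_theta t $ r $ c * e c) g j n"
      by (rule wd_left[of "d 1" "d 2"]) (simp_all add: nd Ce)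
    also have "\<dots> = walk_dist (coin_theta t) g' j n"
      unfolding g'_def by (rule wd_right) (simp add: ne)
    finally show ?thesis .
  qed
  have "(norm g')\<^sup>2 = 1"
    using ng unfolding norm2_vec2 g'_def by (simp add: norm_mult ne flip: norm2_vec2)
  then have ng': "norm g' = 1" using power2_eq_iff_nonneg[of "norm g'" 1] by simp
  have sym': "symmetric_in_distribution (coin_theta t) g'"
    using assms(2) unfolding symmetric_in_distribution_def W by simp
  have "dist_equiv (coin_theta t) g' (coin_theta t) gamma_star"
    by (rule sym_theta_equiv[OF t ng' sym'])
  then have "dist_equiv C g (coin_theta t) gamma_star"
    unfolding dist_equiv_def W by simp
  then show ?thesis using t by blast
qed

theorem theorem2:
  shows "(\<forall>\<theta>\<in>{0..pi/2}. symmetric_in_distribution (coin_theta \<theta>) gamma_star)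
    \<and> (\<forall>C \<gamma>. coin_setup C \<gamma> \<and> symmetric_in_distribution C \<gamma> \<longrightarrow>
          (\<exists>\<theta>\<in>{0..pi/2}. dist_equiv C \<gamma> (coin_theta \<theta>) gamma_star))
    \<and> (\<forall>\<theta>\<in>{0..pi/2}. \<forall>\<theta>'\<in>{0..pi/2}.
          dist_equiv (coin_theta \<theta>) gamma_star (coin_theta \<theta>') gamma_star \<longrightarrow> \<theta> = \<theta>')"
  using part1 part2 part3 by blast


end
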